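(* With the notation and hypotheses of the average bit error rate $\overline{P}_{er}(\bar\gamma)$ (any $m_X,m_Y,\Omega_X,\Omega_Y,\alpha>0$, $\delta_1>0$, $\delta_3\in\mathbb{N}$, $\delta_{2,j}>0$), the diversity order is $$\mathcal{G}_d:=-\lim_{\bar\gamma\to\infty}\frac{\ln\overline{P}_{er}(\bar\gamma)}{\ln\bar\gamma}=\frac{\alpha}{2}m_X,$$ in particular it does not depend on $m_Y$, $\Omega_X$, $\Omega_Y$.
   Context: Fix parameters $m_X,m_Y,\Omega_X,\Omega_Y>0$. The Beaulieu–Xie shadowed envelope is a random variable $\bar R>0$ with density $$f_{\bar R}(r)=\frac{2r^{2m_X-1}}{\Gamma(m_X)}\left(\frac{m_Y\Omega_X}{m_Y\Omega_X+m_X\Omega_Y}\right)^{m_Y}\left(\frac{m_X}{\Omega_X}\right)^{m_X}{}_1F_1\!\left(m_Y;m_X;\frac{m_X^2\Omega_Y r^2}{\Omega_X(m_Y\Omega_X+m_X\Omega_Y)}\right)e^{-\frac{m_X}{\Omega_X}r^2},\quad r>0.$$ For $\alpha>0$ put $$\mathrm{C}_\alpha=\left[\frac{\Gamma(m_X)}{\Gamma(m_X+\frac{2}{\alpha})\,{}_2F_1\!\left(m_Y,-\frac{2}{\alpha};m_X;-\frac{m_X\Omega_Y}{m_Y\Omega_X}\right)}\right]^{\alpha/2}.$$ For $\bar\gamma>0$, the instantaneous SNR of the $\alpha$-Beaulieu–Xie shadowed channel with average SNR $\bar\gamma$ is the random variable $\gamma=\bar\gamma\,\big(\mathrm{C}_\alpha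 m_X\bar R^2/\Omega_X\big)^{2/\alpha}$, and the average bit error rate is $\overline{P}_{er}(\bar\gamma)=\delta_1\sum_{j=1}^{\delta_3}\mathbb{E}\big[Q(\sqrt{2\delta_{2,j}\gamma})\big]$ with $Q(x)=\frac{1}{\sqrt{2\pi}}\int_x^\infty e^{-t^2/2}dt$. Here ${}_1F_1(a;b;z)=\sum_{n\ge0}\frac{(a)_n}{(b)_n}\frac{z^n}{n!}$, ${}_2F_1$ is the Gauss hypergeometric function. *)

theory Defs
  imports "HOL-Analysis.Analysis"
begin

definition hyp1F1 :: "real \<Rightarrow> real \<Rightarrow> real \<Rightarrow> real" where
  "hyp1F1 a b z = (\<Sum>n. pochhammer a n / pochhammer b n * z ^ n / fact n)"

text \<open>Gauss hypergeometric power series (converges for |z| < 1).\<close>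
definition hyp2F1_series :: "real \<Rightarrow> real \<Rightarrow> real \<Rightarrow> real \<Rightarrow> real" where
  "hyp2F1_series a b c z =
     (\<Sum>n. pochhammer a n * pochhammer b n / pochhammer c n * z ^ n / fact n)"

text \<open>Gauss hypergeometric function 2F1(a,b;c;z): the series for z \<ge> 0 (|z| < 1),
  and for z < 0 its analytic continuation given by the Pfaff transformation
  2F1(a,b;c;z) = (1-z)^(-a) 2F1(a,c-b;c;z/(z-1)), where z/(z-1) lies in (0,1).\<close>
definition hyp2F1 :: "real \<Rightarrow> real \<Rightarrow> real \<Rightarrow> real \<Rightarrow> real" where
  "hyp2F1 a b c z =
     (if z < 0 then (1 - z) powr (-a) * hyp2F1_series a (c - b) c (z / (z - 1))
      else hyp2F1_series a b c z)"

definition bx_pdf :: "real \<Rightarrow> real \<Rightarrow> real \<Rightarrow> real \<Rightarrow> real \<Rightarrow> real" where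
  "bx_pdf mX mY OmX OmY r =
     2 * r powr (2 * mX - 1) / Gamma mX
     * (mY * OmX / (mY * OmX + mX * OmY)) powr mY
     * (mX / OmX) powr mX
     * hyp1F1 mY mX (mX\<^sup>2 * OmY * r\<^sup>2 / (OmX * (mY * OmX + mX * OmY)))
     * exp (- (mX / OmX) * r\<^sup>2)"

definition C_alpha :: "real \<Rightarrow> real \<Rightarrow> real \<Rightarrow> real \<Rightarrow> real \<Rightarrow> real" where
  "C_alpha mX mY OmX OmY \<alpha> =
     (Gamma mX / (Gamma (mX + 2 / \<alpha>)
        * hyp2F1 mY (- 2 / \<alpha>) mX (- (mX * OmY) / (mY * OmX)))) powr (\<alpha> / 2)"

definition inst_snr :: "real \<Rightarrow> real \<Rightarrow> real \<Rightarrow> real \<Rightarrow> real \<Rightarrow> real \<Rightarrow> real \<Rightarrow> real" where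
  "inst_snr mX mY OmX OmY \<alpha> gbar r =
     gbar * (C_alpha mX mY OmX OmY \<alpha> * mX * r\<^sup>2 / OmX) powr (2 / \<alpha>)"

definition Qfun :: "real \<Rightarrow> real" where
  "Qfun x = 1 / sqrt (2 * pi) * (LBINT t:{x..}. exp (- t\<^sup>2 / 2))"

text \<open>Average bit error rate; the expectation over the envelope is the integral
  against its density on (0,\<infinity>).\<close>
definition avg_ber :: "real \<Rightarrow> real \<Rightarrow> real \<Rightarrow> real \<Rightarrow> real \<Rightarrow> real \<Rightarrow> (nat \<Rightarrow> real)
    \<Rightarrow> nat \<Rightarrow> real \<Rightarrow> real" where
  "avg_ber mX mY OmX OmY \<alpha> \<delta>1 \<delta>2 \<delta>3 gbar =
     \<delta>1 * (\<Sum>j = 1..\<delta>3. LBINT r:{0<..}.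
        bx_pdf mX mY OmX OmY r * Qfun (sqrt (2 * \<delta>2 j * inst_snr mX mY OmX OmY \<alpha> gbar r)))"

end

theory Submission
  imports Defs "HOL-Probability.Probability" "HOL-Real_Asymp.Real_Asymp"
begin


lemma poch_ratio_bound:
  fixes a b \<theta> :: real assumes a: "a>0" and b: "b>0" and th: "\<theta>>1"
  shows "\<exists>B>0. \<forall>n. pochhammer a n / pochhammer b n \<le> B * \<theta>^n"
proof -
  define R where "R n = pochhammer a n / pochhammer b n" for n
  define N where "N = nat \<lceil>(a - b)/(\<theta> - 1)\<rceil>"
  define B where "B = Max ((\<lambda>n. R n / \<theta>^n) ` {..N})"
  have Rpos: "R n > 0" for n unfolding R_def using a b by (simp add: pochhammer_pos)
  have RS: "R (Suc n) = R n * ((a + n)/(b + n))" for n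
    unfolding R_def by (simp add: pochhammer_Suc field_simps)
  have step: "(a + n)/(b+n) \<le> \<theta>" if "n \<ge> N" for n :: nat
  proof -
    have "real n \<ge> (a - b)/(\<theta> - 1)" using that unfolding N_def
      by (metis le_nat_iff of_nat_le_iff order_trans real_nat_ceiling_ge) 
    then have "(\<theta> - 1) * n \<ge> a - b" using th by (simp add: field_simps)
    then have "a + n \<le> \<theta> * (b + n)" using th b by (simp add: algebra_simps) (smt (verit) mult_le_cancel_right1)
    then show ?thesis using b by (simp add: field_simps)
  qed
  have Bge: "R n / \<theta>^n \<le> B" if "n \<le> N" for n
    unfolding B_def by (rule Max_ge) (use that in auto)
  have main: "R n / \<theta>^n \<le> B" for n
  proof (induction n)
    case 0 then show ?case using Bge[of 0] by simp
  next
    case (Suc n)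
    show ?case
    proof (cases "Suc n \<le> N")
      case True then show ?thesis using Bge by blast
    next
      case False
      then have "n \<ge> N" by simp
      have "R (Suc n) / \<theta>^Suc n = (R n / \<theta>^n) * (((a+n)/(b+n)) / \<theta>)"
        using th by (simp add: RS field_simps)
      also have "\<dots> \<le> (R n / \<theta>^n) * 1"
        using step[OF \<open>n \<ge> N\<close>] th Rpos[of n] a b
        by (intro mult_left_mono) (auto simp: field_simps)
      finally show ?thesis using Suc by simp
    qed
  qed
  have "B > 0" using Bge[of 0] Rpos[of 0] th by simp
  moreover have "R n \<le> B * \<theta>^n" for n using main[of n] th by (simp add: field_simps)
  ultimately show ?thesis unfolding R_def by blast
qed

lemma hyp1F1_bounds:
  fixes a b \<theta> :: real assumes a: "a>0" and b: "b>0" and th: "\<theta>>1"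
  shows "\<exists>B>0. \<forall>z\<ge>0. 1 \<le> hyp1F1 a b z \<and> hyp1F1 a b z \<le> B * exp (\<theta>*z)"
proof -
  obtain B where B: "B>0" "\<And>n. pochhammer a n / pochhammer b n \<le> B * \<theta>^n"
    using poch_ratio_bound[OF a b th] by blast
  have "1 \<le> hyp1F1 a b z \<and> hyp1F1 a b z \<le> B * exp (\<theta>*z)" if z: "z \<ge> 0" for z
  proof -
    define t where "t n = pochhammer a n / pochhammer b n * z ^ n / fact n" for n
    have tnn: "t n \<ge> 0" for n unfolding t_def using a b z by (simp add: pochhammer_pos less_imp_le)
    have tle: "t n \<le> B * ((\<theta>*z)^n /\<^sub>R fact n)" for n
    proof -
      have "t n = (pochhammer a n / pochhammer b n) * (z^n / fact n)" unfolding t_def by simp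
      also have "\<dots> \<le> (B * \<theta>^n) * (z^n / fact n)"
        by (rule mult_right_mono[OF B(2)]) (use z in auto)
      also have "\<dots> = B * ((\<theta>*z)^n /\<^sub>R fact n)" by (simp add: power_mult_distrib field_simps)
      finally show ?thesis .
    qed
    have g: "(\<lambda>n. B * ((\<theta>*z)^n /\<^sub>R fact n)) sums (B * exp (\<theta>*z))"
      by (rule sums_mult[OF exp_converges])
    have sm: "summable t"
      by (rule summable_comparison_test'[OF sums_summable[OF g]]) (use tnn tle in auto)
    have "hyp1F1 a b z = suminf t" unfolding hyp1F1_def t_def by simp
    moreover have "suminf t \<le> B * exp (\<theta>*z)"
      by (rule sums_le[OF tle summable_sums[OF sm] g])
    moreover have "sum t {0} \<le> suminf t"
      by (rule sum_le_suminf[OF sm]) (use tnn in auto)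
    moreover have "sum t {0} = 1" unfolding t_def by simp
    ultimately show ?thesis by simp
  qed
  with B(1) show ?thesis by blast
qed

lemma hyp2F1_series_pos:
  fixes a b c w :: real assumes a: "a>0" and b: "b>0" and c: "c>0" and w: "0 \<le> w" "w < 1"
  shows "hyp2F1_series a b c w \<ge> 1"
proof -
  define \<theta> where "\<theta> = sqrt (2/(1+w))"
  have th: "\<theta> > 1" unfolding \<theta>_def using w by (simp add: real_less_rsqrt)
  have th2: "\<theta>^2 * w < 1" unfolding \<theta>_def using w by (simp add: field_simps)
  obtain B1 where B1: "B1>0" "\<And>n. pochhammer a n / pochhammer 1 n \<le> B1 * \<theta>^n"
    using poch_ratio_bound[OF a zero_less_one th] by blast
  obtain B2 where B2: "B2>0" "\<And>n. pochhammer b n / pochhammer c n \<le> B2 * \<theta>^n"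
    using poch_ratio_bound[OF b c th] by blast
  define t where "t n = pochhammer a n * pochhammer b n / pochhammer c n * w ^ n / fact n" for n
  have tnn: "t n \<ge> 0" for n unfolding t_def using a b c w by (simp add: pochhammer_pos less_imp_le)
  have tle: "t n \<le> (B1*B2) * (\<theta>^2*w)^n" for n
  proof -
    have "t n = (pochhammer a n / pochhammer 1 n) * (pochhammer b n / pochhammer c n) * w^n"
      unfolding t_def by (simp add: pochhammer_fact)
    also have "\<dots> \<le> (B1 * \<theta>^n) * (B2 * \<theta>^n) * w^n"
      using a b c w B1 B2 th
      by (intro mult_right_mono mult_mono) (auto simp: pochhammer_pos less_imp_le)
    also have "\<dots> = (B1*B2) * (\<theta>^2*w)^n" by (simp add: power_mult_distrib power_mult[symmetric] power_add[symmetric] mult_2_right field_simps)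
    finally show ?thesis .
  qed
  have g: "summable (\<lambda>n. (B1*B2) * (\<theta>^2*w)^n)"
    by (rule summable_mult, rule summable_geometric) (use th2 w th in auto)
  have sm: "summable t"
    by (rule summable_comparison_test'[OF g]) (use tnn tle in auto)
  have "sum t {0} \<le> suminf t"
    by (rule sum_le_suminf[OF sm]) (use tnn in auto)
  moreover have "sum t {0} = 1" unfolding t_def by simp
  ultimately show ?thesis unfolding hyp2F1_series_def t_def by simp
qed

lemma C_alpha_pos:
  fixes mX mY OmX OmY \<alpha> :: real
  assumes "mX > 0" and "mY > 0" and "OmX > 0" and "OmY > 0" and "\<alpha> > 0"
  shows "C_alpha mX mY OmX OmY \<alpha> > 0"
proof -
  define z where "z = - (mX * OmY) / (mY * OmX)"
  have z: "z < 0" unfolding z_def using assms by (simp add: divide_neg_pos)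
  have w: "0 \<le> z/(z-1)" "z/(z-1) < 1" using z by (auto simp: field_simps)
  have "hyp2F1_series mY (mX - - 2 / \<alpha>) mX (z/(z-1)) \<ge> 1"
    by (rule hyp2F1_series_pos) (use assms w in \<open>auto intro: add_pos_pos\<close>)
  then have h: "hyp2F1 mY (- 2 / \<alpha>) mX z > 0"
    unfolding hyp2F1_def using z by simp
  have "mX + 2/\<alpha> > 0" using assms by (simp add: add_pos_pos)
  then have "Gamma mX > 0" "Gamma (mX + 2/\<alpha>) > 0" using assms by (auto intro!: Gamma_real_pos)
  then show ?thesis unfolding C_alpha_def z_def[symmetric] using h by simp
qed

lemma pdf_meas: "bx_pdf mX mY OmX OmY \<in> borel_measurable borel"
  unfolding bx_pdf_def hyp1F1_def by measurable

lemma pdf_bounds: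
  fixes mX mY OmX OmY :: real
  assumes mX: "mX > 0" and mY: "mY > 0" and OX: "OmX > 0" and OY: "OmY > 0"
  shows "\<exists>A>0. \<exists>A'>0. \<forall>r>0. 0 \<le> bx_pdf mX mY OmX OmY r \<and>
      bx_pdf mX mY OmX OmY r \<le> A * r powr (2*mX-1) \<and>
      (r \<le> 1 \<longrightarrow> A' * r powr (2*mX-1) \<le> bx_pdf mX mY OmX OmY r)"
proof -
  define q where "q = mX*OmY/(mY*OmX + mX*OmY)"
  define lam where "lam = mX/OmX"
  define K0 where "K0 = 2 / Gamma mX * (mY * OmX / (mY * OmX + mX * OmY)) powr mY * (mX / OmX) powr mX"
  have den: "mY*OmX + mX*OmY > 0" using assms by (simp add: add_pos_pos)
  have q: "0 < q" "q < 1" unfolding q_def using assms den by (auto simp: field_simps)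
  have lam: "lam > 0" unfolding lam_def using assms by simp
  have K0: "K0 > 0" unfolding K0_def using assms den by (auto intro!: Gamma_real_pos)
  have th: "1/q > 1" using q by (simp add: field_simps)
  obtain B where B: "B > 0" "\<And>z. z \<ge> 0 \<Longrightarrow> 1 \<le> hyp1F1 mY mX z \<and> hyp1F1 mY mX z \<le> B * exp ((1/q)*z)"
    using hyp1F1_bounds[OF mY mX th] by blast
  have eq: "bx_pdf mX mY OmX OmY r = K0 * r powr (2*mX-1) * (hyp1F1 mY mX (q*lam*r\<^sup>2) * exp (- lam * r\<^sup>2))" for r
  proof -
    have arg: "mX\<^sup>2 * OmY * r\<^sup>2 / (OmX * (mY * OmX + mX * OmY)) = q*lam*r\<^sup>2"
      unfolding q_def lam_def by (simp add: power2_eq_square mult_ac)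
    show ?thesis unfolding bx_pdf_def arg unfolding K0_def lam_def by (simp only: divide_inverse mult_ac)
  qed
  have "0 \<le> bx_pdf mX mY OmX OmY r \<and>
      bx_pdf mX mY OmX OmY r \<le> (K0*B) * r powr (2*mX-1) \<and>
      (r \<le> 1 \<longrightarrow> (K0*exp(-lam)) * r powr (2*mX-1) \<le> bx_pdf mX mY OmX OmY r)" if r: "r > 0" for r
  proof -
    have z: "q*lam*r\<^sup>2 \<ge> 0" using q lam by simp
    note hb = B(2)[OF z]
    have h1: "hyp1F1 mY mX (q*lam*r\<^sup>2) * exp (- lam * r\<^sup>2) \<le> B"
    proof -
      have "hyp1F1 mY mX (q*lam*r\<^sup>2) * exp (- lam * r\<^sup>2) \<le> B * exp ((1/q)*(q*lam*r\<^sup>2)) * exp (- lam * r\<^sup>2)"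
        using hb by (intro mult_right_mono) auto
      also have "\<dots> = B" using q by (simp add: exp_add[symmetric])
      finally show ?thesis .
    qed
    have h0: "hyp1F1 mY mX (q*lam*r\<^sup>2) * exp (- lam * r\<^sup>2) \<ge> 0" using hb by simp
    have rp: "r powr (2*mX-1) > 0" using r by simp
    have up: "bx_pdf mX mY OmX OmY r \<le> (K0*B) * r powr (2*mX-1)"
      unfolding eq using h1 K0 rp by (simp add: mult_left_mono)
    have nn: "0 \<le> bx_pdf mX mY OmX OmY r" unfolding eq using h0 K0 rp by simp
    have lo: "(K0*exp(-lam)) * r powr (2*mX-1) \<le> bx_pdf mX mY OmX OmY r" if r1: "r \<le> 1"
    proof -
      have "exp (-lam) \<le> exp (- lam * r\<^sup>2)"
        using r r1 lam by (simp add: power_le_one mult_left_le)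
      also have "\<dots> \<le> hyp1F1 mY mX (q*lam*r\<^sup>2) * exp (- lam * r\<^sup>2)"
        using hb by simp
      finally have "exp (-lam) \<le> hyp1F1 mY mX (q*lam*r\<^sup>2) * exp (- lam * r\<^sup>2)" .
      then have "(K0 * r powr (2*mX-1)) * exp (-lam) \<le> (K0 * r powr (2*mX-1)) * (hyp1F1 mY mX (q*lam*r\<^sup>2) * exp (- lam * r\<^sup>2))"
        using K0 rp by (intro mult_left_mono) auto
      then show ?thesis unfolding eq by (simp add: mult_ac)
    qed
    show ?thesis using up nn lo by blast
  qed
  moreover have "K0*B > 0" "K0*exp(-lam) > 0" using K0 B by auto
  ultimately show ?thesis by blast
qed

lemma Q_alt: "Qfun x = (\<integral>t. std_normal_density t * indicator {x..} t \<partial>lborel)"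
proof -
  have "Qfun x = 1 / sqrt (2 * pi) * (\<integral>t. indicator {x..} t * exp (- t\<^sup>2 / 2) \<partial>lborel)"
    unfolding Qfun_def set_lebesgue_integral_def by simp
  also have "\<dots> = (\<integral>t. 1 / sqrt (2 * pi) * (indicator {x..} t * exp (- t\<^sup>2 / 2)) \<partial>lborel)"
    by (rule integral_mult_right_zero[symmetric])
  also have "\<dots> = (\<integral>t. std_normal_density t * indicator {x..} t \<partial>lborel)"
    by (rule Bochner_Integration.integral_cong) (auto simp: std_normal_density_def)
  finally show ?thesis .
qed

lemma Q_int: "integrable lborel (\<lambda>t. std_normal_density t * indicator {x..} t)"
  by (rule integrable_real_mult_indicator) auto

lemma Q_nonneg: "Qfun x \<ge> 0"
  unfolding Q_alt by (rule Bochner_Integration.integral_nonneg) auto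

lemma Q_antimono: "x \<le> y \<Longrightarrow> Qfun y \<le> Qfun x"
  unfolding Q_alt by (rule integral_mono[OF Q_int Q_int]) (auto split: split_indicator)

lemma Q_pos: "Qfun x > 0"
proof -
  define m where "m = std_normal_density (\<bar>x\<bar>+1)"
  have m: "m > 0" unfolding m_def by (simp add: normal_density_pos)
  have "(\<integral>t. m * indicator {x..x+1} t \<partial>lborel) \<le> (\<integral>t. std_normal_density t * indicator {x..} t \<partial>lborel)"
  proof (rule integral_mono[OF _ Q_int])
    show "integrable lborel (\<lambda>t. m * indicator {x..x+1} t)"
      by (rule integrable_mult_right) (auto simp: integrable_indicator_iff)
    fix t :: real
    show "m * indicator {x..x+1} t \<le> std_normal_density t * indicator {x..} t"
    proof (cases "t \<in> {x..x+1}")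
      case True
      then have "\<bar>t\<bar> \<le> \<bar>x\<bar>+1" by auto
      then have "\<bar>t\<bar>\<^sup>2 \<le> (\<bar>x\<bar>+1)\<^sup>2"
        by (intro power_mono) auto
      then have "t\<^sup>2 \<le> (\<bar>x\<bar>+1)\<^sup>2" by simp
      then have "std_normal_density (\<bar>x\<bar>+1) \<le> std_normal_density t"
        unfolding std_normal_density_def by (intro mult_left_mono) auto
      then show ?thesis using True unfolding m_def by (auto split: split_indicator)
    qed (auto split: split_indicator)
  qed
  moreover have "(\<integral>t. m * indicator {x..x+1} t \<partial>lborel) = m" by simp
  ultimately show ?thesis using m unfolding Q_alt by simp
qed

lemma Q_upper:
  assumes x: "x > 0"
  shows "Qfun x \<le> (\<integral>t. std_normal_density t * \<bar>t\<bar>^k \<partial>lborel) / x^k"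
proof -
  have "Qfun x \<le> (\<integral>t. std_normal_density t * \<bar>t\<bar>^k / x^k \<partial>lborel)"
    unfolding Q_alt
  proof (rule integral_mono[OF Q_int])
    show "integrable lborel (\<lambda>t. std_normal_density t * \<bar>t\<bar>^k / x^k)"
      using integrable_std_normal_moment_abs[of k] by simp
    fix t :: real
    show "std_normal_density t * indicator {x..} t \<le> std_normal_density t * \<bar>t\<bar>^k / x^k"
    proof (cases "t \<ge> x")
      case True
      then have "x^k \<le> \<bar>t\<bar>^k" using x by (intro power_mono) auto
      then have "1 \<le> \<bar>t\<bar>^k / x^k" using x by simp
      then have "std_normal_density t * 1 \<le> std_normal_density t * (\<bar>t\<bar>^k / x^k)"
        by (intro mult_left_mono) auto
      then show ?thesis using True by (simp add: indicator_def)
    next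
      case False
      then show ?thesis using x by (simp add: indicator_def)
    qed
  qed
  then show ?thesis by simp
qed

lemma Q_meas: "Qfun \<in> borel_measurable borel"
proof -
  have "mono (\<lambda>x. - Qfun x)" by (auto intro!: monoI Q_antimono)
  then have "(\<lambda>x. - Qfun x) \<in> borel_measurable borel" by (rule borel_measurable_mono)
  then have "(\<lambda>x. - (- Qfun x)) \<in> borel_measurable borel" by measurable
  then show ?thesis by simp
qed

lemma hk_lborel:
  fixes f :: "real \<Rightarrow> real"
  assumes f: "f \<in> borel_measurable borel" and S: "S \<in> sets borel"
    and nn: "\<And>x. x \<in> S \<Longrightarrow> 0 \<le> f x" and I: "(f has_integral I) S"
  shows "integrable lborel (\<lambda>x. f x * indicator S x)" "(\<integral>x. f x * indicator S x \<partial>lborel) = I"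
proof -
  define g where "g x = f x * indicator S x" for x
  have gm: "g \<in> borel_measurable borel" unfolding g_def using f S by measurable
  have gn: "\<And>x. 0 \<le> g x" unfolding g_def using nn by (auto simp: indicator_def)
  have geq: "g = (\<lambda>x. if x \<in> S then f x else 0)" unfolding g_def by (auto simp: indicator_def)
  have gI: "(g has_integral I) UNIV" unfolding geq using I by (simp add: has_integral_restrict_UNIV)
  have nI: "integral\<^sup>N lborel g = I" by (rule nn_integral_has_integral_lborel[OF gm gn gI])
  have gint: "integrable lborel g"
    by (rule integrableI_nonneg) (use gm gn nI in auto)
  then show "integrable lborel (\<lambda>x. f x * indicator S x)" unfolding g_def .
  have "integral UNIV g = (\<integral>x. g x \<partial>lborel)" by (rule integral_lborel[OF gint])
  moreover have "integral UNIV g = I" using gI by (rule integral_unique)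
  ultimately show "(\<integral>x. f x * indicator S x \<partial>lborel) = I" unfolding g_def by simp
qed



lemma core:
  fixes f Q :: "real \<Rightarrow> real" and mX p \<nu> A A' M Qmax :: real and m :: nat
  assumes fm: "f \<in> borel_measurable borel" and Qm: "Q \<in> borel_measurable borel"
    and fb: "\<And>r. r > 0 \<Longrightarrow> 0 \<le> f r \<and> f r \<le> A * r powr (2*mX-1)"
    and fl: "\<And>r. r > 0 \<Longrightarrow> r \<le> 1 \<Longrightarrow> A' * r powr (2*mX-1) \<le> f r"
    and Qnn: "\<And>x. 0 \<le> Q x" and Qanti: "\<And>x y. x \<le> y \<Longrightarrow> Q y \<le> Q x"
    and Qup: "\<And>x. x > 0 \<Longrightarrow> Q x \<le> M / x^(2*m)"
    and Qmax: "\<And>x. x \<ge> 0 \<Longrightarrow> Q x \<le> Qmax"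
    and Qs: "Q (sqrt \<nu>) > 0"
    and p: "p > 0" and \<nu>: "\<nu> > 0" and mX: "mX > 0" and A: "A > 0" and A': "A' > 0"
    and M: "M \<ge> 0" and pm: "p * m > 2*mX"
  shows "\<exists>c1>0. \<exists>c2>0. \<forall>g\<ge>1.
     c1 * g powr (-(2*mX/p)) \<le> (\<integral>r. f r * Q (sqrt (\<nu>*g*r powr p)) * indicator {0<..} r \<partial>lborel) \<and>
     (\<integral>r. f r * Q (sqrt (\<nu>*g*r powr p)) * indicator {0<..} r \<partial>lborel) \<le> c2 * g powr (-(2*mX/p))"
proof -
  define \<beta> where "\<beta> = 2*mX/p"
  define e1 where "e1 = 2*mX - 1"
  define e2 where "e2 = 2*mX - 1 - p*m"
  have e1: "e1 > -1" unfolding e1_def using mX by simp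
  have e2: "e2 < -1" unfolding e2_def using pm by simp
  have Qmax0: "Qmax \<ge> 0" using Qmax[of 0] Qnn[of 0] by simp
  define c1 where "c1 = A' * Q (sqrt \<nu>) / (2*mX)"
  define c2 where "c2 = A*Qmax/(2*mX) + A*M/(\<nu>^m * (p*m - 2*mX))"
  have c1: "c1 > 0" unfolding c1_def using A' Qs mX by simp
  have Qmaxp: "Qmax > 0" using Qmax[of "sqrt \<nu>"] Qs \<nu> by simp
  have c2: "c2 > 0" unfolding c2_def using A Qmaxp M mX \<nu> pm
    by (intro add_pos_nonneg) auto
  have bounds: "c1 * g powr (-\<beta>) \<le> (\<integral>r. f r * Q (sqrt (\<nu>*g*r powr p)) * indicator {0<..} r \<partial>lborel) \<and>
     (\<integral>r. f r * Q (sqrt (\<nu>*g*r powr p)) * indicator {0<..} r \<partial>lborel) \<le> c2 * g powr (-\<beta>)"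
    if g: "g \<ge> 1" for g
  proof -
    define F where "F r = f r * Q (sqrt (\<nu>*g*r powr p)) * indicator {0<..} r" for r
    define r0 where "r0 = g powr (-1/p)"
    have g1: "1 \<le> g powr (1/p)" using g p by (intro ge_one_powr_ge_zero) auto
    have r0: "r0 > 0" "r0 \<le> 1" unfolding r0_def using g p g1 by (auto simp: powr_minus field_simps)
    have r0p: "r0 powr a = g powr (- a / p)" for a unfolding r0_def by (simp add: powr_powr)
    have Fm: "F \<in> borel_measurable borel" unfolding F_def using fm Qm by measurable
    define C2 where "C2 = A*M/(\<nu>*g)^m"
    define h1 where "h1 r = A*Qmax * r powr e1" for r
    define h2 where "h2 r = C2 * r powr e2" for r
    define V1 where "V1 = A*Qmax * (r0 powr (e1+1) / (e1+1))"
    define V2 where "V2 = C2 * (-(r0 powr (e2+1)) / (e2+1))"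
    have C2: "C2 \<ge> 0" unfolding C2_def using A M \<nu> g by simp
    have I1: "(h1 has_integral V1) {0..r0}" unfolding h1_def V1_def
      by (intro has_integral_mult_right has_integral_powr_from_0) (use e1 r0 in auto)
    have I2: "(h2 has_integral V2) {r0..}" unfolding h2_def V2_def
      by (intro has_integral_mult_right has_integral_powr_to_inf) (use e2 r0 in auto)
    have h1m: "h1 \<in> borel_measurable borel" unfolding h1_def by measurable
    have h2m: "h2 \<in> borel_measurable borel" unfolding h2_def by measurable
    have h1n: "0 \<le> h1 r" for r unfolding h1_def using A Qmax0 by simp
    have h2n: "0 \<le> h2 r" for r unfolding h2_def using C2 by simp
    note J1 = hk_lborel[OF h1m _ _ I1] and J2 = hk_lborel[OF h2m _ _ I2]
    have J1i: "integrable lborel (\<lambda>x. h1 x * indicator {0..r0} x)" and J1v: "(\<integral>x. h1 x * indicator {0..r0} x \<partial>lborel) = V1"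
      using J1 h1n by auto
    have J2i: "integrable lborel (\<lambda>x. h2 x * indicator {r0..} x)" and J2v: "(\<integral>x. h2 x * indicator {r0..} x \<partial>lborel) = V2"
      using J2 h2n by auto
    define H where "H x = h1 x * indicator {0..r0} x + h2 x * indicator {r0..} x" for x
    have Hi: "integrable lborel H" unfolding H_def using J1i J2i by simp
    have Fn: "0 \<le> F r" for r unfolding F_def using fb Qnn by (auto simp: indicator_def)
    have FH: "F r \<le> H r" for r
    proof (cases "r > 0")
      case False
      then show ?thesis unfolding F_def H_def using h1n h2n by (auto simp: indicator_def)
    next
      case True
      have fr: "0 \<le> f r" "f r \<le> A * r powr e1" using fb[OF True] unfolding e1_def by auto
      show ?thesis
      proof (cases "r \<le> r0")
        case True2: True
        have "F r = f r * Q (sqrt (\<nu>*g*r powr p))" unfolding F_def using True by simp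
        also have "\<dots> \<le> (A * r powr e1) * Qmax"
          using fr Qnn Qmax[of "sqrt (\<nu>*g*r powr p)"] \<nu> g by (intro mult_mono) auto
        also have "\<dots> = h1 r" unfolding h1_def by simp
        also have "\<dots> \<le> H r" unfolding H_def using True True2 h2n by (simp add: indicator_def)
        finally show ?thesis .
      next
        case False
        define x where "x = sqrt (\<nu>*g*r powr p)"
        have xp: "x > 0" unfolding x_def using \<nu> g True by simp
        have x2: "x^(2*m) = (\<nu>*g)^m * r powr (p*m)"
        proof -
          have "x^(2*m) = (x^2)^m" by (simp add: power_mult)
          also have "x^2 = \<nu>*g*r powr p" unfolding x_def using \<nu> g True by simp
          also have "(\<nu>*g*r powr p)^m = (\<nu>*g)^m * (r powr p)^m" by (simp add: power_mult_distrib)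
          also have "(r powr p)^m = r powr (p*m)" using True by (simp add: powr_realpow[symmetric] powr_powr)
          finally show ?thesis .
        qed
        have "F r = f r * Q x" unfolding F_def x_def using True by simp
        also have "\<dots> \<le> (A * r powr e1) * (M / x^(2*m))"
          using fr Qnn Qup[OF xp] by (intro mult_mono) auto
        also have "\<dots> = C2 * (r powr e1 / r powr (p*m))"
          unfolding x2 C2_def by (simp add: field_simps)
        also have "r powr e1 / r powr (p*m) = r powr e2"
          unfolding e1_def e2_def using True by (simp add: powr_diff)
        also have "C2 * r powr e2 = h2 r" unfolding h2_def ..
        also have "\<dots> \<le> H r" unfolding H_def using False h1n by (simp add: indicator_def)
        finally show ?thesis .
      qed
    qed
    have Fi: "integrable lborel F"
      by (rule Bochner_Integration.integrable_bound[OF Hi]) (use Fm Fn FH h1n h2n in \<open>auto simp: H_def\<close>)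
    have upper: "integral\<^sup>L lborel F \<le> V1 + V2"
    proof -
      have "integral\<^sup>L lborel F \<le> integral\<^sup>L lborel H" by (rule integral_mono[OF Fi Hi FH])
      also have "\<dots> = V1 + V2" unfolding H_def using J1i J2i J1v J2v by simp
      finally show ?thesis .
    qed
    have gp: "g > 0" using g by simp
    have V1e: "V1 = A*Qmax/(2*mX) * g powr (-\<beta>)"
      unfolding V1_def e1_def r0p \<beta>_def by simp
    have "r0 powr (e2+1) = g powr (-\<beta> + real m)"
      unfolding r0p e2_def \<beta>_def using p by (simp add: field_simps)
    also have "\<dots> = g powr (-\<beta>) * g powr (real m)" by (rule powr_add)
    also have "g powr (real m) = g^m" using gp by (rule powr_realpow)
    finally have r2: "r0 powr (e2+1) = g powr (-\<beta>) * g^m" .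
    have V2e: "V2 = A*M/(\<nu>^m * (p*m - 2*mX)) * g powr (-\<beta>)"
    proof -
      have "-(e2+1) = p*m - 2*mX" unfolding e2_def by simp
      then have "V2 = C2 * (r0 powr (e2+1) / (p*m - 2*mX))" unfolding V2_def
        by (metis divide_minus_left divide_minus_right)
      also have "\<dots> = A*M/(\<nu>^m * g^m) * (g powr (-\<beta>) * g^m / (p*m - 2*mX))"
        unfolding r2 C2_def by (simp add: power_mult_distrib)
      also have "\<dots> = A*M/(\<nu>^m * (p*m - 2*mX)) * g powr (-\<beta>)"
        using gp \<nu> by (simp add: field_simps)
      finally show ?thesis .
    qed
    have V12: "V1 + V2 = c2 * g powr (-\<beta>)"
      unfolding V1e V2e c2_def by (simp add: algebra_simps)
    define L where "L r = A' * Q (sqrt \<nu>) * r powr e1" for r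
    define W where "W = A' * Q (sqrt \<nu>) * (r0 powr (e1+1) / (e1+1))"
    have IL: "(L has_integral W) {0..r0}" unfolding L_def W_def
      by (intro has_integral_mult_right has_integral_powr_from_0) (use e1 r0 in auto)
    have Lm: "L \<in> borel_measurable borel" unfolding L_def by measurable
    have Ln: "0 \<le> L r" for r unfolding L_def using A' Qnn by simp
    note JL = hk_lborel[OF Lm _ _ IL]
    have JLi: "integrable lborel (\<lambda>x. L x * indicator {0..r0} x)" and JLv: "(\<integral>x. L x * indicator {0..r0} x \<partial>lborel) = W"
      using JL Ln by auto
    have LF: "L r * indicator {0..r0} r \<le> F r" for r
    proof (cases "r > 0 \<and> r \<le> r0")
      case False
      then show ?thesis
      proof (cases "r = 0")
        case True then show ?thesis unfolding L_def using Fn by simp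
      next
        case False2: False
        with False have "r \<notin> {0..r0}" by auto
        then show ?thesis using Fn by simp
      qed
    next
      case True
      have "r powr p \<le> r0 powr p" using True p by (intro powr_mono2) auto
      also have "r0 powr p = 1/g" using r0p[of p] p g by (simp add: powr_minus_divide)
      finally have "\<nu>*g*r powr p \<le> \<nu>"
        using \<nu> g by (simp add: field_simps)
      then have q: "Q (sqrt \<nu>) \<le> Q (sqrt (\<nu>*g*r powr p))" by (intro Qanti) simp
      have "L r * indicator {0..r0} r = (A' * r powr e1) * Q (sqrt \<nu>)" unfolding L_def using True by simp
      also have "\<dots> \<le> f r * Q (sqrt (\<nu>*g*r powr p))"
        using fl[of r] fb[of r] True r0 q Qnn A' unfolding e1_def by (intro mult_mono) auto
      also have "\<dots> = F r" unfolding F_def using True by simp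
      finally show ?thesis .
    qed
    have lower: "W \<le> integral\<^sup>L lborel F"
      using integral_mono[OF JLi Fi LF] JLv by simp
    have Wc: "W = c1 * g powr (-\<beta>)"
      unfolding W_def c1_def \<beta>_def e1_def r0p by simp
    show ?thesis using upper lower V12 Wc unfolding F_def by simp
  qed
  show ?thesis using c1 c2 bounds unfolding \<beta>_def by blast
qed



lemma limit_from_bounds:
  fixes P :: "real \<Rightarrow> real" and c1 c2 \<beta> :: real
  assumes c1: "c1 > 0" and c2: "c2 > 0"
    and b: "\<And>g. g \<ge> 1 \<Longrightarrow> c1 * g powr (-\<beta>) \<le> P g \<and> P g \<le> c2 * g powr (-\<beta>)"
  shows "((\<lambda>g. ln (P g) / ln g) \<longlongrightarrow> -\<beta>) at_top"
proof (rule tendsto_sandwich)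
  have ev: "eventually (\<lambda>g::real. g > 1) at_top" using eventually_gt_at_top[of "1::real"] by simp
  have key: "(ln c1 - \<beta> * ln g) / ln g \<le> ln (P g) / ln g \<and> ln (P g) / ln g \<le> (ln c2 - \<beta> * ln g) / ln g"
    if g: "g > 1" for g
  proof -
    have lg: "ln g > 0" using g by simp
    have pos: "c1 * g powr (-\<beta>) > 0" using c1 g by simp
    from b[of g] g have b1: "c1 * g powr (-\<beta>) \<le> P g" and b2: "P g \<le> c2 * g powr (-\<beta>)" by auto
    have Pp: "P g > 0" using pos b1 by linarith
    have "ln (c1 * g powr (-\<beta>)) \<le> ln (P g)" using b1 pos by simp
    moreover have "ln (c1 * g powr (-\<beta>)) = ln c1 - \<beta> * ln g" using c1 g by (simp add: ln_mult ln_powr)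
    moreover have "ln (P g) \<le> ln (c2 * g powr (-\<beta>))" using b2 Pp by simp
    moreover have "ln (c2 * g powr (-\<beta>)) = ln c2 - \<beta> * ln g" using c2 g by (simp add: ln_mult ln_powr)
    ultimately show ?thesis using lg by (simp add: divide_right_mono)
  qed
  show "eventually (\<lambda>g. (ln c1 - \<beta> * ln g) / ln g \<le> ln (P g) / ln g) at_top"
    using ev by eventually_elim (use key in blast)
  show "eventually (\<lambda>g. ln (P g) / ln g \<le> (ln c2 - \<beta> * ln g) / ln g) at_top"
    using ev by eventually_elim (use key in blast)
  show "((\<lambda>g. (ln c1 - \<beta> * ln g) / ln g) \<longlongrightarrow> -\<beta>) at_top" by real_asymp
  show "((\<lambda>g. (ln c2 - \<beta> * ln g) / ln g) \<longlongrightarrow> -\<beta>) at_top" by real_asymp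
qed

lemma per_j:
  fixes mX mY OmX OmY \<alpha> \<delta> :: real
  assumes mX: "mX > 0" and mY: "mY > 0" and OX: "OmX > 0" and OY: "OmY > 0" and al: "\<alpha> > 0"
    and d: "\<delta> > 0"
  shows "\<exists>c1>0. \<exists>c2>0. \<forall>g\<ge>1.
     c1 * g powr (-(\<alpha>/2*mX)) \<le> (LBINT r:{0<..}. bx_pdf mX mY OmX OmY r * Qfun (sqrt (2 * \<delta> * inst_snr mX mY OmX OmY \<alpha> g r))) \<and>
     (LBINT r:{0<..}. bx_pdf mX mY OmX OmY r * Qfun (sqrt (2 * \<delta> * inst_snr mX mY OmX OmY \<alpha> g r))) \<le> c2 * g powr (-(\<alpha>/2*mX))"
proof -
  define Kc where "Kc = C_alpha mX mY OmX OmY \<alpha> * mX / OmX"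
  have Kc: "Kc > 0" unfolding Kc_def using C_alpha_pos[OF mX mY OX OY al] mX OX by simp
  define p where "p = 4/\<alpha>"
  define \<nu> where "\<nu> = 2 * \<delta> * Kc powr (2/\<alpha>)"
  define m where "m = nat \<lceil>\<alpha>*mX\<rceil> + 1"
  define M where "M = (\<integral>t. std_normal_density t * \<bar>t\<bar>^(2*m) \<partial>lborel)"
  have p: "p > 0" unfolding p_def using al by simp
  have \<nu>: "\<nu> > 0" unfolding \<nu>_def using d Kc by simp
  have M: "M \<ge> 0" unfolding M_def by (rule Bochner_Integration.integral_nonneg) simp
  have mge: "real m \<ge> \<alpha>*mX + 1" unfolding m_def by linarith
  have pm: "p * m > 2*mX"
  proof -
    have "p * m \<ge> p * (\<alpha>*mX + 1)" using p mge by (intro mult_left_mono) auto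
    moreover have "p * (\<alpha>*mX + 1) = 4*mX + 4/\<alpha>" unfolding p_def using al by (simp add: field_simps)
    moreover have "4/\<alpha> > 0" using al by simp
    ultimately show ?thesis using mX by linarith
  qed
  obtain A A' where A: "A > 0" "A' > 0" and AB: "\<And>r. r > 0 \<Longrightarrow> 0 \<le> bx_pdf mX mY OmX OmY r \<and>
      bx_pdf mX mY OmX OmY r \<le> A * r powr (2*mX-1) \<and>
      (r \<le> 1 \<longrightarrow> A' * r powr (2*mX-1) \<le> bx_pdf mX mY OmX OmY r)"
    using pdf_bounds[OF mX mY OX OY] by blast
  have Qup: "\<And>x. x > 0 \<Longrightarrow> Qfun x \<le> M / x^(2*m)" unfolding M_def by (rule Q_upper)
  have Qmax: "\<And>x. x \<ge> 0 \<Longrightarrow> Qfun x \<le> Qfun 0" by (rule Q_antimono)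
  obtain c1 c2 where c: "c1 > 0" "c2 > 0" and cb: "\<And>g. g \<ge> 1 \<Longrightarrow>
     c1 * g powr (-(2*mX/p)) \<le> (\<integral>r. bx_pdf mX mY OmX OmY r * Qfun (sqrt (\<nu>*g*r powr p)) * indicator {0<..} r \<partial>lborel) \<and>
     (\<integral>r. bx_pdf mX mY OmX OmY r * Qfun (sqrt (\<nu>*g*r powr p)) * indicator {0<..} r \<partial>lborel) \<le> c2 * g powr (-(2*mX/p))"
    using core[OF pdf_meas Q_meas _ _ Q_nonneg Q_antimono Qup Qmax Q_pos p \<nu> mX A(1) A(2) M pm] AB
    by blast
  have ex: "2*mX/p = \<alpha>/2*mX" unfolding p_def by (simp add: field_simps)
  have eqI: "(LBINT r:{0<..}. bx_pdf mX mY OmX OmY r * Qfun (sqrt (2 * \<delta> * inst_snr mX mY OmX OmY \<alpha> g r)))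
     = (\<integral>r. bx_pdf mX mY OmX OmY r * Qfun (sqrt (\<nu>*g*r powr p)) * indicator {0<..} r \<partial>lborel)"
    if g: "g \<ge> 1" for g
    unfolding set_lebesgue_integral_def
  proof (rule Bochner_Integration.integral_cong[OF refl])
    fix r :: real
    show "indicator {0<..} r *\<^sub>R (bx_pdf mX mY OmX OmY r * Qfun (sqrt (2 * \<delta> * inst_snr mX mY OmX OmY \<alpha> g r)))
      = bx_pdf mX mY OmX OmY r * Qfun (sqrt (\<nu>*g*r powr p)) * indicator {0<..} r"
    proof (cases "r > 0")
      case False then show ?thesis by simp
    next
      case True
      have "(Kc * r\<^sup>2) powr (2/\<alpha>) = Kc powr (2/\<alpha>) * (r\<^sup>2) powr (2/\<alpha>)"
        using Kc True by (simp add: powr_mult)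
      also have "(r\<^sup>2) powr (2/\<alpha>) = r powr p"
      proof -
        have "r\<^sup>2 = r powr 2" using True by (simp add: powr_realpow)
        then show ?thesis unfolding p_def by (simp add: powr_powr)
      qed
      finally have a: "(Kc * r\<^sup>2) powr (2/\<alpha>) = Kc powr (2/\<alpha>) * r powr p" .
      have b: "inst_snr mX mY OmX OmY \<alpha> g r = g * (Kc*r\<^sup>2) powr (2/\<alpha>)"
        unfolding inst_snr_def Kc_def by (simp only: divide_inverse mult_ac)
      have "2 * \<delta> * inst_snr mX mY OmX OmY \<alpha> g r = 2 * \<delta> * (g * (Kc powr (2/\<alpha>) * r powr p))"
        by (simp only: b a)
      also have "\<dots> = \<nu>*g*r powr p" unfolding \<nu>_def by (simp only: mult_ac)
      finally have "2 * \<delta> * inst_snr mX mY OmX OmY \<alpha> g r = \<nu>*g*r powr p" .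
      then show ?thesis using True by simp
    qed
  qed
  show ?thesis
  proof (rule exI[of _ c1], rule conjI[OF c(1)], rule exI[of _ c2], rule conjI[OF c(2)], intro allI impI conjI)
    fix g :: real assume g: "g \<ge> 1"
    note cg = cb[OF g, unfolded ex]
    show "c1 * g powr (-(\<alpha>/2*mX)) \<le> (LBINT r:{0<..}. bx_pdf mX mY OmX OmY r * Qfun (sqrt (2 * \<delta> * inst_snr mX mY OmX OmY \<alpha> g r)))"
      unfolding eqI[OF g] using cg by (rule conjunct1)
    show "(LBINT r:{0<..}. bx_pdf mX mY OmX OmY r * Qfun (sqrt (2 * \<delta> * inst_snr mX mY OmX OmY \<alpha> g r))) \<le> c2 * g powr (-(\<alpha>/2*mX))"
      unfolding eqI[OF g] using cg by (rule conjunct2)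
  qed
qed



theorem corollary3:
  fixes mX mY OmX OmY \<alpha> \<delta>1 :: real and \<delta>2 :: "nat \<Rightarrow> real" and \<delta>3 :: nat
  assumes "mX > 0" and "mY > 0" and "OmX > 0" and "OmY > 0" and "\<alpha> > 0"
    and "\<delta>1 > 0" and "\<delta>3 \<ge> 1" and "\<And>j. j \<in> {1..\<delta>3} \<Longrightarrow> \<delta>2 j > 0"
  shows "((\<lambda>gbar. ln (avg_ber mX mY OmX OmY \<alpha> \<delta>1 \<delta>2 \<delta>3 gbar) / ln gbar)
            \<longlongrightarrow> - (\<alpha> / 2 * mX)) at_top"
proof -
  define I where "I j g = (LBINT r:{0<..}. bx_pdf mX mY OmX OmY r * Qfun (sqrt (2 * \<delta>2 j * inst_snr mX mY OmX OmY \<alpha> g r)))" for j g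
  define \<beta> where "\<beta> = \<alpha> / 2 * mX"
  have "\<forall>j\<in>{1..\<delta>3}. \<exists>cc::real\<times>real. fst cc > 0 \<and> snd cc > 0 \<and>
     (\<forall>g\<ge>1. fst cc * g powr (-\<beta>) \<le> I j g \<and> I j g \<le> snd cc * g powr (-\<beta>))"
  proof
    fix j assume j: "j \<in> {1..\<delta>3}"
    obtain c1 c2 where "c1 > 0" "c2 > 0" "\<forall>g\<ge>1. c1 * g powr (-\<beta>) \<le> I j g \<and> I j g \<le> c2 * g powr (-\<beta>)"
      using per_j[OF assms(1-5) assms(8)[OF j]] unfolding I_def \<beta>_def by blast
    then show "\<exists>cc::real\<times>real. fst cc > 0 \<and> snd cc > 0 \<and>
     (\<forall>g\<ge>1. fst cc * g powr (-\<beta>) \<le> I j g \<and> I j g \<le> snd cc * g powr (-\<beta>))"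
      by (intro exI[of _ "(c1,c2)"]) auto
  qed
  then obtain cc where cc: "\<And>j. j \<in> {1..\<delta>3} \<Longrightarrow> fst (cc j) > 0 \<and> snd (cc j) > 0 \<and>
     (\<forall>g\<ge>1. fst (cc j) * g powr (-\<beta>) \<le> I j g \<and> I j g \<le> snd (cc j) * g powr (-\<beta>))"
    by metis
  define c1 where "c1 = \<delta>1 * (\<Sum>j=1..\<delta>3. fst (cc j))"
  define c2 where "c2 = \<delta>1 * (\<Sum>j=1..\<delta>3. snd (cc j))"
  have ne: "{1..\<delta>3} \<noteq> {}" using assms(7) by simp
  have c1: "c1 > 0" unfolding c1_def using assms(6) cc ne by (intro mult_pos_pos sum_pos) auto
  have c2: "c2 > 0" unfolding c2_def using assms(6) cc ne by (intro mult_pos_pos sum_pos) auto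
  have P: "avg_ber mX mY OmX OmY \<alpha> \<delta>1 \<delta>2 \<delta>3 g = \<delta>1 * (\<Sum>j=1..\<delta>3. I j g)" for g
    unfolding avg_ber_def I_def ..
  have b: "c1 * g powr (-\<beta>) \<le> avg_ber mX mY OmX OmY \<alpha> \<delta>1 \<delta>2 \<delta>3 g \<and>
           avg_ber mX mY OmX OmY \<alpha> \<delta>1 \<delta>2 \<delta>3 g \<le> c2 * g powr (-\<beta>)" if g: "g \<ge> 1" for g
  proof
    have "(\<Sum>j=1..\<delta>3. fst (cc j)) * g powr (-\<beta>) = (\<Sum>j=1..\<delta>3. fst (cc j) * g powr (-\<beta>))"
      by (rule sum_distrib_right)
    also have "\<dots> \<le> (\<Sum>j=1..\<delta>3. I j g)" using cc g by (intro sum_mono) blast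
    finally have "(\<Sum>j=1..\<delta>3. fst (cc j)) * g powr (-\<beta>) \<le> (\<Sum>j=1..\<delta>3. I j g)" .
    then show "c1 * g powr (-\<beta>) \<le> avg_ber mX mY OmX OmY \<alpha> \<delta>1 \<delta>2 \<delta>3 g"
      unfolding P c1_def using assms(6) by (simp add: mult.assoc)
    have "(\<Sum>j=1..\<delta>3. I j g) \<le> (\<Sum>j=1..\<delta>3. snd (cc j) * g powr (-\<beta>))" using cc g by (intro sum_mono) blast
    also have "\<dots> = (\<Sum>j=1..\<delta>3. snd (cc j)) * g powr (-\<beta>)"
      by (rule sum_distrib_right[symmetric])
    finally have "(\<Sum>j=1..\<delta>3. I j g) \<le> (\<Sum>j=1..\<delta>3. snd (cc j)) * g powr (-\<beta>)" .
    then show "avg_ber mX mY OmX OmY \<alpha> \<delta>1 \<delta>2 \<delta>3 g \<le> c2 * g powr (-\<beta>)"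
      unfolding P c2_def using assms(6) by (simp add: mult.assoc)
  qed
  show ?thesis using limit_from_bounds[OF c1 c2 b] unfolding \<beta>_def .
qed


end
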